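(* Let $w$ be a factor of slope $\alpha$ and let $m$ be an abelian period of $w$ with $m\notin\mathcal{Q}_\alpha\cup\mathcal{M}_\alpha$. If $a_1\ge4$ and $(a_2-1)q_1+2<m<a_2q_1$, then $m$ is not the minimum abelian period of $w$.
   Context: $\alpha\in(0,1)$ irrational, $\alpha=[0;a_1,a_2,\ldots]$ with positive integers $a_i$, $a_1\ge2$; $q_{-1}=0$, $q_0=1$, $q_1=a_1$, $q_k=a_kq_{k-1}+q_{k-2}$ ($k\ge2$); for $k\ge2$, $1\le\ell<a_k$, $q_{k,\ell}=\ell q_{k-1}+q_{k-2}$. $\mathcal{Q}_\alpha=\{q_k:k\ge0\}\cup\{q_{k,\ell}: k\ge2,\ 1\le\ell<a_k\}$ and $\mathcal{M}_\alpha=\{tq_k: k\ge0,\ 1\le t\le a_{k+1}\}$. Sturmian words: on $\mathbb{T}=[0,1)$ with $R(\rho)=\{\rho+\alpha\}$ and either $I_0=[0,1-\alpha)$, $I_1=[1-\alpha,1)$ or $I_0=(0,1-\alpha]$, $I_1=(1-\alpha,1]$, $\mathbf{s}_{\rho,\alpha}$ has $n$-th letter $0$ iff $R^n(\rho)\in I_0$; all share the set $\mathcal{L}_\alpha$ of finite factors (factors of slope $\alpha$). Parikh vector of a binary word $u$: $(|u|_0,|u|_1)$; $P$ is contained in $Q$ if $P\le Q$ componentwise and $P\neq Q$. An abelian decomposition of $w$ is $w=u_0u_1\cdots u_{n-1}u_n$, $n\ge2$, with $u_1,\ldots,u_{n-1}$ of common Parikh vector $P$ and the Parikh vectors of $u_0,u_n$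 contained in $P$; the common length of $u_1,\dots,u_{n-1}$ is an abelian period; the minimum abelian period is the least one. *)

theory Defs
  imports Complex_Main
begin

text \<open>Complete remainders: x_0 = alpha, x_{k+1} = frac(1/x_k); then
  a_{k+1} = floor(1/x_k), so alpha = [0; a_1, a_2, ...].\<close>
fun cf_rem :: "real \<Rightarrow> nat \<Rightarrow> real" where
  "cf_rem \<alpha> 0 = \<alpha>"
| "cf_rem \<alpha> (Suc k) = frac (1 / cf_rem \<alpha> k)"

text \<open>Partial quotient a_k (meaningful for k >= 1).\<close>
definition cf_a :: "real \<Rightarrow> nat \<Rightarrow> nat" where
  "cf_a \<alpha> k = nat \<lfloor>1 / cf_rem \<alpha> (k - 1)\<rfloor>"

text \<open>Denominators q_k for k >= 0 (q_{-1} = 0, q_0 = 1, q_1 = a_1).\<close>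
fun cf_q :: "real \<Rightarrow> nat \<Rightarrow> nat" where
  "cf_q \<alpha> 0 = 1"
| "cf_q \<alpha> (Suc 0) = cf_a \<alpha> 1"
| "cf_q \<alpha> (Suc (Suc k)) = cf_a \<alpha> (k + 2) * cf_q \<alpha> (k + 1) + cf_q \<alpha> k"

definition cf_q_int :: "real \<Rightarrow> nat \<Rightarrow> nat \<Rightarrow> nat" where
  "cf_q_int \<alpha> k l = l * cf_q \<alpha> (k - 1) + cf_q \<alpha> (k - 2)"

definition Q_set :: "real \<Rightarrow> nat set" where
  "Q_set \<alpha> = {cf_q \<alpha> k | k. True} \<union>
     {cf_q_int \<alpha> k l | k l. 2 \<le> k \<and> 1 \<le> l \<and> l < cf_a \<alpha> k}"

definition M_set :: "real \<Rightarrow> nat set" where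
  "M_set \<alpha> = {t * cf_q \<alpha> k | k t. 1 \<le> t \<and> t \<le> cf_a \<alpha> (k + 1)}"

text \<open>The point R^n(rho) = frac(rho + n alpha) on T = [0,1).
  Variant False: I_0 = [0,1-alpha), I_1 = [1-alpha,1).
  Variant True:  I_0 = (0,1-alpha], I_1 = (1-alpha,1] (the point 0 of T is identified with 1).\<close>
definition sturm :: "bool \<Rightarrow> real \<Rightarrow> real \<Rightarrow> nat \<Rightarrow> nat" where
  "sturm upper \<alpha> \<rho> n =
     (let x = frac (\<rho> + real n * \<alpha>) in
      if upper then (if 0 < x \<and> x \<le> 1 - \<alpha> then 0 else 1)
      else (if x < 1 - \<alpha> then 0 else 1))"

definition factors_slope :: "real \<Rightarrow> nat list set" where
  "factors_slope \<alpha> = {w. \<exists>\<rho> upper j. 0 \<le> \<rho> \<and> \<rho> < 1 \<and>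
       w = map (\<lambda>i. sturm upper \<alpha> \<rho> (j + i)) [0..<length w]}"

definition parikh :: "nat list \<Rightarrow> nat \<times> nat" where
  "parikh u = (length (filter (\<lambda>x. x = 0) u), length (filter (\<lambda>x. x = 1) u))"

definition pv_contained :: "nat \<times> nat \<Rightarrow> nat \<times> nat \<Rightarrow> bool" where
  "pv_contained P Q \<longleftrightarrow> fst P \<le> fst Q \<and> snd P \<le> snd Q \<and> P \<noteq> Q"

text \<open>An abelian decomposition w = u_0 u_1 ... u_n (n >= 2) is a list us = [u_0,...,u_n].\<close>
definition abelian_decomp :: "nat list \<Rightarrow> nat list list \<Rightarrow> bool" where
  "abelian_decomp w us \<longleftrightarrow> 3 \<le> length us \<and> concat us = w \<and>
     (\<forall>i. 1 \<le> i \<and> i < length us - 1 \<longrightarrow> parikh (us ! i) = parikh (us ! 1)) \<and>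
     pv_contained (parikh (us ! 0)) (parikh (us ! 1)) \<and>
     pv_contained (parikh (last us)) (parikh (us ! 1))"

definition abelian_period :: "nat list \<Rightarrow> nat \<Rightarrow> bool" where
  "abelian_period w m \<longleftrightarrow> (\<exists>us. abelian_decomp w us \<and> length (us ! 1) = m)"

definition min_abelian_period :: "nat list \<Rightarrow> nat \<Rightarrow> bool" where
  "min_abelian_period w m \<longleftrightarrow> abelian_period w m \<and> (\<forall>m'. abelian_period w m' \<longrightarrow> m \<le> m')"

end

theory Submission
  imports Defs
begin


definition FF :: "real \<Rightarrow> real \<Rightarrow> nat \<Rightarrow> int" where
  "FF \<alpha> \<theta> n = \<lfloor>\<theta> + real n * \<alpha>\<rfloor>"

definition lw :: "real \<Rightarrow> real \<Rightarrow> nat \<Rightarrow> nat list" where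
  "lw \<alpha> \<theta> N = map (\<lambda>i. nat (FF \<alpha> \<theta> (Suc i) - FF \<alpha> \<theta> i)) [0..<N]"

lemma floor_add_small:
  fixes z d :: real
  assumes "0 \<le> d" "d < 1"
  shows "\<lfloor>z + d\<rfloor> \<le> \<lfloor>z\<rfloor> + 1"
proof -
  have "z < of_int \<lfloor>z\<rfloor> + 1" by (rule real_of_int_floor_add_one_gt)
  then have "z + d < of_int (\<lfloor>z\<rfloor> + 2)" using assms by linarith
  then have "\<lfloor>z + d\<rfloor> < \<lfloor>z\<rfloor> + 2" by (simp add: floor_less_iff)
  then show ?thesis by simp
qed

lemma FF_step:
  assumes "0 \<le> \<alpha>" "\<alpha> < 1"
  shows "FF \<alpha> \<theta> (Suc i) - FF \<alpha> \<theta> i \<in> {0,1}"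
proof -
  let ?z = "\<theta> + real i * \<alpha>"
  have e: "\<theta> + real (Suc i) * \<alpha> = ?z + \<alpha>" by (simp add: algebra_simps)
  have "\<lfloor>?z\<rfloor> \<le> \<lfloor>?z + \<alpha>\<rfloor>" using assms by (intro floor_mono) simp
  moreover have "\<lfloor>?z + \<alpha>\<rfloor> \<le> \<lfloor>?z\<rfloor> + 1"
    using assms by (intro floor_add_small) auto
  ultimately show ?thesis unfolding FF_def e by auto
qed

lemma FF_mono:
  assumes "0 \<le> \<alpha>" "i \<le> j"
  shows "FF \<alpha> \<theta> i \<le> FF \<alpha> \<theta> j"
  unfolding FF_def using assms by (intro floor_mono add_left_mono mult_right_mono) auto

lemma FF_diff_le1:
  assumes "0 \<le> \<alpha>" "i \<le> j" "real (j - i) * \<alpha> < 1"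
  shows "FF \<alpha> \<theta> j - FF \<alpha> \<theta> i \<le> 1"
proof -
  have e: "\<theta> + real j * \<alpha> = (\<theta> + real i * \<alpha>) + real (j - i) * \<alpha>"
    using assms(2) by (simp add: algebra_simps of_nat_diff)
  have "0 \<le> real (j - i) * \<alpha>" using assms by simp
  then show ?thesis unfolding FF_def e
    using assms floor_add_small[of "real (j - i) * \<alpha>" "\<theta> + real i * \<alpha>"] by linarith
qed

lemma parikh_append: "parikh (xs @ ys) = (fst (parikh xs) + fst (parikh ys), snd (parikh xs) + snd (parikh ys))"
  by (simp add: parikh_def)

lemma seg_parikh:
  assumes "0 \<le> \<alpha>" "\<alpha> < 1" "i \<le> j"
  shows "int (snd (parikh (map (\<lambda>k. nat (FF \<alpha> \<theta> (Suc k) - FF \<alpha> \<theta> k)) [i..<j]))) = FF \<alpha> \<theta> j - FF \<alpha> \<theta> i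
       \<and> int (fst (parikh (map (\<lambda>k. nat (FF \<alpha> \<theta> (Suc k) - FF \<alpha> \<theta> k)) [i..<j]))) = int (j - i) - (FF \<alpha> \<theta> j - FF \<alpha> \<theta> i)"
  using assms(3)
proof (induction j rule: dec_induct)
  case base
  then show ?case by (simp add: parikh_def)
next
  case (step j)
  have st: "FF \<alpha> \<theta> (Suc j) - FF \<alpha> \<theta> j \<in> {0,1}" using FF_step assms by blast
  show ?case using step st by (auto simp: parikh_append parikh_def of_nat_diff)
qed

lemma lw_seg:
  assumes "i \<le> j" "j \<le> N"
  shows "take (j - i) (drop i (lw \<alpha> \<theta> N)) = map (\<lambda>k. nat (FF \<alpha> \<theta> (Suc k) - FF \<alpha> \<theta> k)) [i..<j]"
  using assms unfolding lw_def by (simp add: drop_map take_map)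

lemma lw_set: "0 \<le> \<alpha> \<Longrightarrow> \<alpha> < 1 \<Longrightarrow> set (lw \<alpha> \<theta> N) \<subseteq> {0,1}"
proof
  fix x assume a: "0 \<le> \<alpha>" "\<alpha> < 1" and "x \<in> set (lw \<alpha> \<theta> N)"
  then obtain i where "x = nat (FF \<alpha> \<theta> (Suc i) - FF \<alpha> \<theta> i)" unfolding lw_def by auto
  then show "x \<in> {0,1}" using FF_step[OF a, of \<theta> i] by auto
qed

lemma length_parikh: "set xs \<subseteq> {0,1} \<Longrightarrow> length xs = fst (parikh xs) + snd (parikh xs)"
  by (induction xs) (auto simp: parikh_def)



lemma sturm_lower:
  assumes "0 < \<alpha>" "\<alpha> < 1"
  shows "sturm False \<alpha> \<rho> n = nat (\<lfloor>(\<rho> + real n * \<alpha>) + \<alpha>\<rfloor> - \<lfloor>\<rho> + real n * \<alpha>\<rfloor>)"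
proof -
  define y where "y = \<rho> + real n * \<alpha>"
  have fr: "frac y = y - of_int \<lfloor>y\<rfloor>" by (simp add: frac_def)
  have c1: "of_int \<lfloor>y\<rfloor> \<le> y" "y < of_int \<lfloor>y\<rfloor> + 1" by linarith+
  show ?thesis
  proof (cases "frac y < 1 - \<alpha>")
    case True
    then have "\<lfloor>y + \<alpha>\<rfloor> = \<lfloor>y\<rfloor>" using c1 fr assms by (subst floor_eq_iff) linarith
    then show ?thesis using True unfolding sturm_def y_def[symmetric] by (simp add: Let_def)
  next
    case False
    then have "\<lfloor>y + \<alpha>\<rfloor> = \<lfloor>y\<rfloor> + 1" using c1 fr assms by (subst floor_eq_iff) (simp, linarith)
    then show ?thesis using False unfolding sturm_def y_def[symmetric] by (simp add: Let_def)
  qed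
qed

lemma sturm_upper:
  assumes "0 < \<alpha>" "\<alpha> < 1"
  shows "sturm True \<alpha> \<rho> n = nat (\<lceil>(\<rho> + real n * \<alpha>) + \<alpha>\<rceil> - \<lceil>\<rho> + real n * \<alpha>\<rceil>)"
proof -
  define y where "y = \<rho> + real n * \<alpha>"
  have fr: "frac y = y - of_int \<lfloor>y\<rfloor>" by (simp add: frac_def)
  have c1: "of_int \<lfloor>y\<rfloor> \<le> y" "y < of_int \<lfloor>y\<rfloor> + 1" by linarith+
  show ?thesis
  proof (cases "frac y = 0")
    case True
    then have yi: "y = of_int \<lfloor>y\<rfloor>" using fr by simp
    then have "\<lceil>y\<rceil> = \<lfloor>y\<rfloor>" by (metis ceiling_of_int)
    moreover have "\<lceil>y + \<alpha>\<rceil> = \<lfloor>y\<rfloor> + 1" using assms yi by (subst ceiling_eq_iff) linarith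
    ultimately show ?thesis using True unfolding sturm_def y_def[symmetric] by (simp add: Let_def)
  next
    case False
    then have pos: "0 < frac y" using frac_ge_0[of y] by linarith
    then have cy: "\<lceil>y\<rceil> = \<lfloor>y\<rfloor> + 1" using fr c1 by (subst ceiling_eq_iff) linarith
    show ?thesis
    proof (cases "frac y \<le> 1 - \<alpha>")
      case True
      then have "\<lceil>y + \<alpha>\<rceil> = \<lfloor>y\<rfloor> + 1" using fr c1 assms pos by (subst ceiling_eq_iff) linarith
      then show ?thesis using True pos cy unfolding sturm_def y_def[symmetric] by (simp add: Let_def)
    next
      case F2: False
      then have "\<lceil>y + \<alpha>\<rceil> = \<lfloor>y\<rfloor> + 2" using fr c1 assms pos by (subst ceiling_eq_iff) linarith
      then show ?thesis using F2 pos cy unfolding sturm_def y_def[symmetric] by (simp add: Let_def)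
    qed
  qed
qed

lemma exists_eps:
  fixes y :: "nat \<Rightarrow> real"
  shows "\<exists>\<epsilon>>0. \<epsilon> < 1 \<and> (\<forall>i\<le>L. 0 < frac (y i) \<longrightarrow> \<epsilon> < frac (y i))"
proof (induction L)
  case 0
  show ?case
  proof (cases "0 < frac (y 0)")
    case True
    have "frac (y 0) < 1" by (rule frac_lt_1)
    then show ?thesis using True by (intro exI[of _ "frac (y 0) / 2"]) auto
  next
    case False
    then show ?thesis by (intro exI[of _ "1/2"]) auto
  qed
next
  case (Suc L)
  then obtain e where e: "e > 0" "e < 1" "\<forall>i\<le>L. 0 < frac (y i) \<longrightarrow> e < frac (y i)" by blast
  show ?case
  proof (cases "0 < frac (y (Suc L))")
    case True
    define f where "f = frac (y (Suc L))"
    have "0 < f" using True f_def by simp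
    then have "min e (f / 2) < f" by linarith
    then show ?thesis
      using e True \<open>0 < f\<close> unfolding f_def[symmetric] by (intro exI[of _ "min e (f / 2)"]) (auto simp: le_Suc_eq f_def)
  next
    case False
    then show ?thesis using e by (intro exI[of _ e]) (auto simp: le_Suc_eq)
  qed
qed

lemma factor_lw:
  assumes "0 < \<alpha>" "\<alpha> < 1" "w \<in> factors_slope \<alpha>"
  shows "\<exists>\<theta>. w = lw \<alpha> \<theta> (length w)"
proof -
  obtain \<rho> upper j where w: "w = map (\<lambda>i. sturm upper \<alpha> \<rho> (j + i)) [0..<length w]"
    using assms(3) unfolding factors_slope_def by blast
  show ?thesis
  proof (cases upper)
    case False
    define \<theta> where "\<theta> = \<rho> + real j * \<alpha>"
    have "\<And>i. sturm upper \<alpha> \<rho> (j + i) = nat (FF \<alpha> \<theta> (Suc i) - FF \<alpha> \<theta> i)"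
      using False sturm_lower[OF assms(1,2)] unfolding FF_def \<theta>_def by (simp add: algebra_simps)
    then have "w = lw \<alpha> \<theta> (length w)" unfolding lw_def by (subst w) simp
    then show ?thesis by blast
  next
    case True
    define y where "y = (\<lambda>i::nat. \<rho> + real (j + i) * \<alpha>)"
    obtain e where e: "e > 0" "e < 1" "\<forall>i\<le>length w. 0 < frac (y i) \<longrightarrow> e < frac (y i)"
      using exists_eps by blast
    define \<theta> where "\<theta> = \<rho> + real j * \<alpha> - e"
    have key: "\<lfloor>\<theta> + real i * \<alpha>\<rfloor> = \<lceil>y i\<rceil> - 1" if "i \<le> length w" for i
    proof -
      have t: "\<theta> + real i * \<alpha> = y i - e" unfolding \<theta>_def y_def by (simp add: algebra_simps)
      have fr: "frac (y i) = y i - of_int \<lfloor>y i\<rfloor>" by (simp add: frac_def)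
      have c1: "of_int \<lfloor>y i\<rfloor> \<le> y i" "y i < of_int \<lfloor>y i\<rfloor> + 1" by linarith+
      show ?thesis
      proof (cases "frac (y i) = 0")
        case True
        then have yi: "y i = of_int \<lfloor>y i\<rfloor>" using fr by simp
        then have "\<lceil>y i\<rceil> = \<lfloor>y i\<rfloor>" by (metis ceiling_of_int)
        moreover have "\<lfloor>y i - e\<rfloor> = \<lfloor>y i\<rfloor> - 1" using e yi by (subst floor_eq_iff) linarith
        ultimately show ?thesis using t by simp
      next
        case False
        then have pos: "0 < frac (y i)" using frac_ge_0[of "y i"] by linarith
        then have "e < frac (y i)" using e that by blast
        then have "\<lfloor>y i - e\<rfloor> = \<lfloor>y i\<rfloor>" using fr c1 e by (subst floor_eq_iff) linarith
        moreover have "\<lceil>y i\<rceil> = \<lfloor>y i\<rfloor> + 1" using fr c1 pos by (subst ceiling_eq_iff) linarith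
        ultimately show ?thesis using t by simp
      qed
    qed
    have "\<And>i. i < length w \<Longrightarrow> sturm upper \<alpha> \<rho> (j + i) = nat (FF \<alpha> \<theta> (Suc i) - FF \<alpha> \<theta> i)"
    proof -
      fix i assume i: "i < length w"
      have "sturm upper \<alpha> \<rho> (j + i) = nat (\<lceil>y i + \<alpha>\<rceil> - \<lceil>y i\<rceil>)"
        using True sturm_upper[OF assms(1,2)] unfolding y_def by simp
      also have "y i + \<alpha> = y (Suc i)" unfolding y_def by (simp add: algebra_simps)
      also have "nat (\<lceil>y (Suc i)\<rceil> - \<lceil>y i\<rceil>) = nat (FF \<alpha> \<theta> (Suc i) - FF \<alpha> \<theta> i)"
        unfolding FF_def using key[of i] key[of "Suc i"] i by simp
      finally show "sturm upper \<alpha> \<rho> (j + i) = nat (FF \<alpha> \<theta> (Suc i) - FF \<alpha> \<theta> i)" .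
    qed
    then have "w = lw \<alpha> \<theta> (length w)" unfolding lw_def
      by (subst w) (auto intro!: map_cong)
    then show ?thesis by blast
  qed
qed



lemma concat_blocks_len:
  assumes "\<forall>v\<in>set vs. length v = m"
  shows "length (concat vs) = length vs * m"
  using assms by (induction vs) auto

lemma concat_blocks_parikh:
  assumes "\<forall>v\<in>set vs. parikh v = P \<and> length v = m" "k \<le> length vs"
  shows "parikh (take (k*m) (concat vs)) = (k * fst P, k * snd P)"
  using assms
proof (induction vs arbitrary: k)
  case Nil
  then show ?case by (simp add: parikh_def)
next
  case (Cons v vs)
  show ?case
  proof (cases k)
    case 0
    then show ?thesis by (simp add: parikh_def)
  next
    case (Suc k')
    have lv: "length v = m" "parikh v = P" using Cons.prems by auto
    have "take (k*m) (concat (v # vs)) = v @ take (k'*m) (concat vs)"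
      using Suc lv by (simp add: take_append)
    moreover have "parikh (take (k'*m) (concat vs)) = (k' * fst P, k' * snd P)"
      using Cons.IH[of k'] Cons.prems Suc by auto
    ultimately show ?thesis using lv Suc by (simp add: parikh_append)
  qed
qed

lemma pv_contained_len:
  assumes "pv_contained (parikh u) (parikh v)" "set u \<subseteq> {0,1}" "set v \<subseteq> {0,1}"
  shows "length u < length v"
proof -
  have "fst (parikh u) + snd (parikh u) < fst (parikh v) + snd (parikh v)"
    using assms(1) unfolding pv_contained_def by (cases "parikh u", cases "parikh v") auto
  then show ?thesis using length_parikh assms(2,3) by metis
qed

lemma decomp_extract:
  assumes "abelian_decomp w us" "set w \<subseteq> {0,1}"
  shows "\<exists>b0 T e c. 1 \<le> T \<and> b0 < length (us!1) \<and> e < length (us!1) \<and>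
     length w = b0 + T * length (us!1) + e \<and>
     (\<forall>k\<le>T. snd (parikh (take (b0 + k * length (us!1)) w)) = snd (parikh (take b0 w)) + k * c)"
proof -
  have len: "3 \<le> length us" and cc: "concat us = w"
    and eqP: "\<forall>i. 1 \<le> i \<and> i < length us - 1 \<longrightarrow> parikh (us ! i) = parikh (us ! 1)"
    and h: "pv_contained (parikh (us ! 0)) (parikh (us ! 1))"
    and t: "pv_contained (parikh (last us)) (parikh (us ! 1))"
    using assms(1) unfolding abelian_decomp_def by blast+
  obtain u0 rest where us: "us = u0 # rest" using len by (cases us) auto
  have "rest \<noteq> []" using len us by auto
  then obtain vs ul where rest: "rest = vs @ [ul]" by (cases rest rule: rev_exhaust) auto
  have lvs: "length vs = length us - 2" using us rest by simp
  have wd0: "w = u0 @ concat vs @ ul" using cc us rest by simp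
  have vs_ne: "vs \<noteq> []" using lvs len by auto
  have us1: "us ! 1 = vs ! 0" using us rest vs_ne by (simp add: nth_append)
  define m where "m = length (us!1)"
  have setus: "\<forall>u\<in>set us. set u \<subseteq> {0,1}"
  proof
    fix u assume "u \<in> set us"
    then have "set u \<subseteq> set (concat us)" by auto
    then show "set u \<subseteq> {0,1}" using assms(2) cc by (rule_tac order_trans) auto
  qed
  have s1: "set (us!1) \<subseteq> {0,1}" using setus len by (simp add: nth_mem)
  have allv: "\<forall>v\<in>set vs. parikh v = parikh (us!1) \<and> length v = m"
  proof
    fix v assume v: "v \<in> set vs"
    then obtain i where i: "i < length vs" "v = vs ! i" by (metis in_set_conv_nth)
    have "us ! (Suc i) = v" using us rest i by (simp add: nth_append)
    moreover have "1 \<le> Suc i \<and> Suc i < length us - 1" using i lvs by simp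
    ultimately have pv: "parikh v = parikh (us!1)" using eqP by metis
    have sv: "set v \<subseteq> {0,1}" using setus v us rest by auto
    have "length v = m" unfolding m_def using length_parikh[OF sv] length_parikh[OF s1] pv by simp
    then show "parikh v = parikh (us!1) \<and> length v = m" using pv by simp
  qed
  define b0 where "b0 = length u0"
  define T where "T = length vs"
  define e where "e = length ul"
  have s0: "set u0 \<subseteq> {0,1}" "set ul \<subseteq> {0,1}" using setus us rest by auto
  have "b0 < m" unfolding b0_def m_def using pv_contained_len[OF h] s0 s1 us by simp
  moreover have "e < m" unfolding e_def m_def using pv_contained_len[OF t] s0 s1 us rest by simp
  moreover have "length w = b0 + T * m + e"
  proof -
    have "length (concat vs) = T * m" using concat_blocks_len[of vs m] allv T_def by auto
    moreover have wd: "w = u0 @ concat vs @ ul" using cc us rest by simp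
    ultimately show ?thesis unfolding b0_def e_def by (simp del: length_concat)
  qed
  moreover have K: "\<forall>k\<le>T. snd (parikh (take (b0 + k * m) w)) = snd (parikh (take b0 w)) + k * snd (parikh (us!1))"
  proof (intro allI impI)
    fix k assume k: "k \<le> T"
    have lc: "length (concat vs) = T * m" using concat_blocks_len[of vs m] allv T_def by auto
    have km: "k * m \<le> length (concat vs)" using lc k by simp
    have "take (b0 + k*m) w = u0 @ take (k*m) (concat vs)"
      using km unfolding b0_def wd0 by (simp add: take_append)
    moreover have "take b0 w = u0" unfolding b0_def wd0 by simp
    ultimately show "snd (parikh (take (b0 + k * m) w)) = snd (parikh (take b0 w)) + k * snd (parikh (us!1))"
      using concat_blocks_parikh[OF allv, of k] k T_def by (simp add: parikh_append)
  qed
  moreover have "1 \<le> T" using vs_ne T_def by (cases vs) auto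
  ultimately show ?thesis unfolding m_def
    by (intro exI[of _ b0] exI[of _ T] exI[of _ e] exI[of _ "snd (parikh (us!1))"]) simp
qed

lemma concat_blks:
  assumes "s + T * L \<le> length w"
  shows "concat (map (\<lambda>t. take L (drop (s + t * L) w)) [0..<T]) = take (T * L) (drop s w)"
  using assms
proof (induction T)
  case 0
  then show ?case by simp
next
  case (Suc T)
  have "take (Suc T * L) (drop s w) = take (T * L) (drop s w) @ take L (drop (T*L) (drop s w))"
  proof -
    have "Suc T * L = T * L + L" by simp
    then show ?thesis by (simp only: take_add)
  qed
  also have "drop (T*L) (drop s w) = drop (s + T * L) w" by (simp add: add.commute)
  finally show ?case using Suc by simp
qed

lemma build_period:
  assumes w: "w = lw \<alpha> \<theta> N" and a: "0 \<le> \<alpha>" "\<alpha> < 1" and sL: "s < L" "s + L \<le> N"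
    and La: "real (L - 1) * \<alpha> < 1"
    and blk: "\<forall>t < (N - s) div L. FF \<alpha> \<theta> (s + (t+1)*L) - FF \<alpha> \<theta> (s + t*L) = 1"
  shows "abelian_period w L"
proof -
  define T where "T = (N - s) div L"
  have L0: "0 < L" using sL by simp
  have "L \<le> N - s" using sL by simp
  then have "0 < (N - s) div L" using L0 by (simp add: div_greater_zero_iff)
  then have T1: "1 \<le> T" unfolding T_def by simp
  have dm: "T * L \<le> N - s" unfolding T_def by (rule div_times_less_eq_dividend)
  have TL: "s + T * L \<le> N" using dm sL by simp
  have "N - s - T * L = (N - s) mod L" unfolding T_def by (rule minus_div_mult_eq_mod)
  then have rem: "N - (s + T * L) < L" using L0 by simp
  have lenw: "length w = N" using w unfolding lw_def by simp
  define blkf where "blkf = (\<lambda>t. take L (drop (s + t * L) w))"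
  define us where "us = take s w # map blkf [0..<T] @ [drop (s + T * L) w]"
  have lus: "length us = T + 2" unfolding us_def by simp
  have cat: "concat us = w"
  proof -
    have "concat us = take s w @ take (T * L) (drop s w) @ drop (s + T * L) w"
      unfolding us_def blkf_def using concat_blks[of s T L w] TL lenw by simp
    also have "take (T * L) (drop s w) @ drop (s + T * L) w = drop s w"
      by (metis append_take_drop_id drop_drop add.commute)
    finally show ?thesis by simp
  qed
  have pb: "parikh (blkf t) = (L - 1, 1)" if t: "t < T" for t
  proof -
    have "(t+1) * L \<le> T * L" using t by (intro mult_le_mono1) simp
    then have le: "s + (t+1) * L \<le> N" using TL by simp
    have eqL: "s + (t+1)*L - (s + t*L) = L" by simp
    have "blkf t = take (s + (t+1)*L - (s + t*L)) (drop (s + t*L) w)" unfolding blkf_def eqL ..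
    also have "\<dots> = map (\<lambda>k. nat (FF \<alpha> \<theta> (Suc k) - FF \<alpha> \<theta> k)) [s + t*L..<s + (t+1)*L]"
      unfolding w by (rule lw_seg) (use le in auto)
    finally have bt: "blkf t = \<dots>" .
    have sp: "int (snd (parikh (blkf t))) = 1" "int (fst (parikh (blkf t))) = int L - 1"
      using seg_parikh[OF a, of "s + t*L" "s + (t+1)*L" \<theta>] bt blk t unfolding T_def by (auto simp: eqL)
    then show ?thesis using L0 by (cases "parikh (blkf t)") auto
  qed
  have mid: "us ! i = blkf (i - 1)" if "1 \<le> i" "i \<le> T" for i
    unfolding us_def using that by (cases i) (auto simp: nth_append)
  have us1: "parikh (us ! 1) = (L - 1, 1)" using mid[of 1] pb T1 by simp
  have len1: "length (us ! 1) = L" using mid[of 1] T1 sL lenw TL unfolding blkf_def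
    by (simp add: min_def) (use L0 in auto)
  have hd: "pv_contained (parikh (us ! 0)) (parikh (us ! 1))"
  proof -
    have "us ! 0 = take (s - 0) (drop 0 w)" unfolding us_def by simp
    also have "\<dots> = map (\<lambda>k. nat (FF \<alpha> \<theta> (Suc k) - FF \<alpha> \<theta> k)) [0..<s]"
      unfolding w by (rule lw_seg) (use sL in auto)
    finally have h: "us ! 0 = \<dots>" .
    have sp: "int (snd (parikh (us!0))) = FF \<alpha> \<theta> s - FF \<alpha> \<theta> 0" "int (fst (parikh (us!0))) = int s - (FF \<alpha> \<theta> s - FF \<alpha> \<theta> 0)"
      using seg_parikh[OF a, of 0 s \<theta>] h by auto
    have "real (s - 0) * \<alpha> < 1"
    proof -
      have "real s \<le> real (L - 1)" using sL by simp
      then have "real s * \<alpha> \<le> real (L - 1) * \<alpha>" using a by (intro mult_right_mono) auto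
      then show ?thesis using La by simp
    qed
    then have le1: "FF \<alpha> \<theta> s - FF \<alpha> \<theta> 0 \<le> 1" using FF_diff_le1[OF a(1), of 0 s] by simp
    have ge0: "0 \<le> FF \<alpha> \<theta> s - FF \<alpha> \<theta> 0" using FF_mono[OF a(1), of 0 s] by simp
    show ?thesis unfolding us1 pv_contained_def using sp le1 ge0 sL by (cases "parikh (us!0)") auto
  qed
  have tl: "pv_contained (parikh (last us)) (parikh (us ! 1))"
  proof -
    define i where "i = s + T * L"
    have "last us = drop i w" unfolding us_def i_def by simp
    also have "\<dots> = take (N - i) (drop i w)" using lenw by simp
    also have "\<dots> = map (\<lambda>k. nat (FF \<alpha> \<theta> (Suc k) - FF \<alpha> \<theta> k)) [i..<N]"
      unfolding w by (rule lw_seg) (use TL i_def in auto)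
    finally have h: "last us = \<dots>" .
    have iN: "i \<le> N" using TL i_def by simp
    have sp: "int (snd (parikh (last us))) = FF \<alpha> \<theta> N - FF \<alpha> \<theta> i" "int (fst (parikh (last us))) = int (N - i) - (FF \<alpha> \<theta> N - FF \<alpha> \<theta> i)"
      using seg_parikh[OF a iN, of \<theta>] h by auto
    have "real (N - i) * \<alpha> < 1"
    proof -
      have "real (N - i) \<le> real (L - 1)" using rem i_def by simp
      then have "real (N - i) * \<alpha> \<le> real (L - 1) * \<alpha>" using a by (intro mult_right_mono) auto
      then show ?thesis using La by simp
    qed
    then have le1: "FF \<alpha> \<theta> N - FF \<alpha> \<theta> i \<le> 1" using FF_diff_le1[OF a(1) iN] by simp
    have ge0: "0 \<le> FF \<alpha> \<theta> N - FF \<alpha> \<theta> i" using FF_mono[OF a(1) iN] by simp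
    have "N - i < L" using rem i_def by simp
    then show ?thesis unfolding us1 pv_contained_def using sp le1 ge0 by (cases "parikh (last us)") auto
  qed
  have "abelian_decomp w us"
    unfolding abelian_decomp_def
  proof (intro conjI allI impI)
    show "3 \<le> length us" using lus T1 by simp
    show "concat us = w" by (rule cat)
    fix i assume "1 \<le> i \<and> i < length us - 1"
    then show "parikh (us ! i) = parikh (us ! 1)" using mid[of i] pb us1 lus by auto
  qed (use hd tl in auto)
  then show ?thesis unfolding abelian_period_def using len1 by blast
qed



lemma classA:
  assumes w: "w = lw \<alpha> \<theta> N" and a: "0 < \<alpha>" "\<alpha> < 1" and a1: "1 \<le> a1"
    and d: "\<delta> = 1 - real a1 * \<alpha>" "0 < \<delta>"
    and pN: "p \<le> N" and sN: "p mod a1 + a1 \<le> N"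
    and c1: "frac (\<theta> + real p * \<alpha>) + real (p div a1) * \<delta> < 1"
    and c2: "real ((N - p) div a1) * \<delta> \<le> frac (\<theta> + real p * \<alpha>)"
  shows "abelian_period w a1"
proof -
  define s where "s = p mod a1"
  define K where "K = p div a1"
  define F' where "F' = (N - p) div a1"
  define x where "x = frac (\<theta> + real p * \<alpha>)"
  have x01: "0 \<le> x" "x < 1" unfolding x_def by (auto simp: frac_lt_1)
  have pK: "p = s + K * a1" unfolding s_def K_def by simp
  have T: "(N - s) div a1 = K + F'"
  proof -
    have "N - s = (N - p) + K * a1" using pK pN by simp
    then show ?thesis unfolding F'_def using a1 by simp
  qed
  have fl: "FF \<alpha> \<theta> (s + t * a1) = \<lfloor>\<theta> + real p * \<alpha>\<rfloor> + int t - int K" if t: "t \<le> K + F'" for t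
  proof -
    have e1: "\<theta> + real (s + t * a1) * \<alpha> = \<theta> + real p * \<alpha> + (real t - real K) * (real a1 * \<alpha>)"
      using pK by (simp add: algebra_simps)
    have e2: "\<theta> + real p * \<alpha> = of_int \<lfloor>\<theta> + real p * \<alpha>\<rfloor> + x" unfolding x_def by (simp add: frac_def)
    have e3: "\<theta> + real (s + t * a1) * \<alpha> = of_int (\<lfloor>\<theta> + real p * \<alpha>\<rfloor> + int t - int K) + (x - (real t - real K) * \<delta>)"
    proof -
      have ha: "real a1 * \<alpha> = 1 - \<delta>" using d(1) by simp
      have "\<theta> + real (s + t * a1) * \<alpha> = \<theta> + real p * \<alpha> + (real t - real K) * (1 - \<delta>)"
        using e1 unfolding ha .
      then show ?thesis using e2 by (simp add: algebra_simps)
    qed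
    have b: "0 \<le> x - (real t - real K) * \<delta> \<and> x - (real t - real K) * \<delta> < 1"
    proof (cases "t \<le> K")
      case True
      then have "0 \<le> (real K - real t) * \<delta>" "(real K - real t) * \<delta> \<le> real K * \<delta>" using d by auto
      moreover have "x + real K * \<delta> < 1" using c1 unfolding x_def K_def .
      moreover have "(real t - real K) * \<delta> = - ((real K - real t) * \<delta>)" by (simp add: algebra_simps)
      ultimately show ?thesis using x01 by linarith
    next
      case False
      then have "0 \<le> (real t - real K) * \<delta>" "(real t - real K) * \<delta> \<le> real F' * \<delta>"
        using d t by (auto intro!: mult_right_mono)
      moreover have "real F' * \<delta> \<le> x" using c2 unfolding x_def F'_def .
      ultimately show ?thesis using x01 by linarith
    qed
    show ?thesis unfolding FF_def e3 using b by (subst floor_eq_iff) simp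
  qed
  have blk: "\<forall>t < (N - s) div a1. FF \<alpha> \<theta> (s + (t+1)*a1) - FF \<alpha> \<theta> (s + t*a1) = 1"
  proof (intro allI impI)
    fix t assume "t < (N - s) div a1"
    then have "t + 1 \<le> K + F'" "t \<le> K + F'" using T by auto
    from fl[OF this(1)] fl[OF this(2)] show "FF \<alpha> \<theta> (s + (t+1)*a1) - FF \<alpha> \<theta> (s + t*a1) = 1" by simp
  qed
  have "real (a1 - 1) * \<alpha> < 1"
  proof -
    have "real (a1 - 1) * \<alpha> \<le> real a1 * \<alpha>" using a by (intro mult_right_mono) auto
    then show ?thesis using d by linarith
  qed
  then show ?thesis
    using build_period[OF w less_imp_le[OF a(1)] a(2), of s a1] blk sN a1 unfolding s_def by simp
qed



lemma ceil_step:
  fixes v \<alpha> :: real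
  assumes "0 < v" "0 < \<alpha>"
  shows "v * \<alpha> \<le> real (nat \<lceil>v\<rceil>) * \<alpha> \<and> real (nat \<lceil>v\<rceil>) * \<alpha> < v * \<alpha> + \<alpha>"
proof -
  have r: "real (nat \<lceil>v\<rceil>) = of_int \<lceil>v\<rceil>" using assms by simp
  have "v \<le> of_int \<lceil>v\<rceil>" "of_int \<lceil>v\<rceil> < v + 1" by (simp add: le_of_int_ceiling) linarith
  then have "v * \<alpha> \<le> of_int \<lceil>v\<rceil> * \<alpha>" "of_int \<lceil>v\<rceil> * \<alpha> < (v + 1) * \<alpha>"
    using assms by (auto intro: mult_right_mono mult_strict_right_mono)
  then show ?thesis unfolding r by (simp add: distrib_right)
qed

lemma point_in:
  fixes \<xi> A B \<alpha> \<delta> :: real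
  assumes x: "0 \<le> \<xi>" "\<xi> < 1" and AB: "0 \<le> A" "B \<le> 1" "\<alpha> + \<delta> \<le> B - A"
    and a: "0 < \<alpha>" "0 < \<delta>" "1 \<le> a1" "real a1 * \<alpha> = 1 - \<delta>"
  shows "\<exists>u < a1. A \<le> frac (\<xi> + real u * \<alpha>) \<and> frac (\<xi> + real u * \<alpha>) < B"
proof -
  have a1m: "real (a1 - 1) * \<alpha> = 1 - \<delta> - \<alpha>" using a by (simp add: of_nat_diff algebra_simps)
  show ?thesis
  proof (cases "\<xi> < A")
    case True
    define v where "v = (A - \<xi>) / \<alpha>"
    have v0: "0 < v" unfolding v_def using True a by simp
    have va: "v * \<alpha> = A - \<xi>" unfolding v_def using a by simp
    define u where "u = nat \<lceil>v\<rceil>"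
    have b: "A - \<xi> \<le> real u * \<alpha>" "real u * \<alpha> < A - \<xi> + \<alpha>" using ceil_step[OF v0 a(1)] va unfolding u_def by auto
    have fr: "frac (\<xi> + real u * \<alpha>) = \<xi> + real u * \<alpha>" using b AB a x by (subst frac_eq) auto
    have "u < a1"
    proof (rule ccontr)
      assume "\<not> u < a1"
      then have "real (a1 - 1) \<le> real u - 1" using a by (simp add: of_nat_diff)
      then have "real (a1 - 1) * \<alpha> \<le> (real u - 1) * \<alpha>" using a by (intro mult_right_mono) auto
      then show False using b a1m AB x by (simp add: algebra_simps)
    qed
    then show ?thesis using fr b AB a by (intro exI[of _ u]) auto
  next
    case False
    show ?thesis
    proof (cases "\<xi> < B")
      case True
      then show ?thesis using False a by (intro exI[of _ 0]) (auto simp: frac_eq x)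
    next
      case F2: False
      define v where "v = (1 + A - \<xi>) / \<alpha>"
      have v0: "0 < v" unfolding v_def using x AB a by simp
      have va: "v * \<alpha> = 1 + A - \<xi>" unfolding v_def using a by simp
      define u where "u = nat \<lceil>v\<rceil>"
      have b: "1 + A - \<xi> \<le> real u * \<alpha>" "real u * \<alpha> < 1 + A - \<xi> + \<alpha>" using ceil_step[OF v0 a(1)] va unfolding u_def by auto
      have fl: "\<lfloor>\<xi> + real u * \<alpha>\<rfloor> = 1" using b AB a x by (subst floor_eq_iff) auto
      have fr: "frac (\<xi> + real u * \<alpha>) = \<xi> + real u * \<alpha> - 1" unfolding frac_def fl by simp
      have "u < a1"
      proof (rule ccontr)
        assume "\<not> u < a1"
        then have "real (a1 - 1) \<le> real u - 1" using a by (simp add: of_nat_diff)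
        then have "real (a1 - 1) * \<alpha> \<le> (real u - 1) * \<alpha>" using a by (intro mult_right_mono) auto
        moreover have "(real u - 1) * \<alpha> = real u * \<alpha> - \<alpha>" by (simp add: algebra_simps)
        ultimately show False using b a1m AB x F2 by linarith
      qed
      then show ?thesis using fr b AB a by (intro exI[of _ u]) auto
    qed
  qed
qed



lemma nat_lt_real:
  assumes "(x::nat) < y * z"
  shows "real x \<le> real y * real z - 1"
proof -
  have "x + 1 \<le> y * z" using assms by simp
  then have "real (x + 1) \<le> real (y * z)" by (simp only: of_nat_le_iff)
  then show ?thesis by simp
qed

lemma main_core:
  fixes \<alpha> \<theta> \<delta> :: real and c :: int
  assumes w: "w = lw \<alpha> \<theta> N" and a: "0 < \<alpha>" "\<alpha> < 1" and a1: "4 \<le> a1"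
    and d: "\<delta> = 1 - real a1 * \<alpha>" "0 < \<delta>" and a2: "2 \<le> a2" "real a2 * \<delta> < \<alpha>"
    and a1b: "1 < (real a1 + 1) * \<alpha>"
    and m: "m = (a2 - 1) * a1 + r" "3 \<le> r" "r + 1 \<le> a1"
    and N: "N = b0 + T * m + e" "b0 < m" "e < m" "1 \<le> T"
    and F: "FF \<alpha> \<theta> (b0 + T * m) - FF \<alpha> \<theta> b0 = int T * c"
  shows "abelian_period w a1"
proof -
  define \<xi> where "\<xi> = frac (\<theta> + real b0 * \<alpha>)"
  define \<gamma> where "\<gamma> = real r * \<alpha> - real (a2 - 1) * \<delta>"
  have x01: "0 \<le> \<xi>" "\<xi> < 1" unfolding \<xi>_def by (auto simp: frac_lt_1)
  have ra1: "real a1 * \<alpha> = 1 - \<delta>" using d by simp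
  have a2m1: "real (a2 - 1) = real a2 - 1" using a2 by (simp add: of_nat_diff)
  have da: "\<delta> < \<alpha>" using a1b d by (simp add: algebra_simps)
  have "4 * \<alpha> \<le> real a1 * \<alpha>" using a1 a by (intro mult_right_mono) auto
  then have dpa: "\<delta> + \<alpha> < 1" using d a by linarith
  have a2d1: "real (a2 - 1) * \<delta> < \<alpha>"
  proof -
    have "real (a2 - 1) * \<delta> = real a2 * \<delta> - \<delta>" unfolding a2m1 by (simp add: algebra_simps)
    then show ?thesis using a2(2) d(2) by linarith
  qed
  have mal: "real m * \<alpha> = real (a2 - 1) + \<gamma>"
  proof -
    have "real m = real (a2 - 1) * real a1 + real r" unfolding m(1) by (simp only: of_nat_add of_nat_mult)
    then have "real m * \<alpha> = real (a2 - 1) * (real a1 * \<alpha>) + real r * \<alpha>" by (simp add: algebra_simps)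
    then show ?thesis unfolding ra1 \<gamma>_def by (simp add: algebra_simps)
  qed
  have r3: "3 * \<alpha> \<le> real r * \<alpha>" using m a by (intro mult_right_mono) auto
  have ga: "2 * \<alpha> < \<gamma>" unfolding \<gamma>_def using r3 a2d1 by linarith
  have ra: "real r * \<alpha> \<le> 1 - \<delta> - \<alpha>"
  proof -
    have "real r * \<alpha> \<le> (real a1 - 1) * \<alpha>" using m a by (intro mult_right_mono) auto
    then show ?thesis using ra1 by (simp add: algebra_simps)
  qed
  have g1: "\<alpha> + real a2 * \<delta> \<le> 1 - \<gamma>" unfolding \<gamma>_def a2m1 using ra by (simp add: algebra_simps)
  have "1 * a1 \<le> (a2 - 1) * a1" using a2 by (intro mult_le_mono1) simp
  then have mge: "a1 + 3 \<le> m" using m by linarith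
  have "a2 * a1 = (a2 - 1) * a1 + a1" using a2 by (cases a2) auto
  then have mlt: "m < a2 * a1" using m by simp
  have Nm: "b0 + m \<le> N" using N by (cases T) auto
  have fl: "\<lfloor>\<xi> + real T * \<gamma>\<rfloor> = int T * (c - int (a2 - 1))"
  proof -
    have e: "\<theta> + real (b0 + T * m) * \<alpha> = of_int (\<lfloor>\<theta> + real b0 * \<alpha>\<rfloor> + int T * int (a2 - 1)) + (\<xi> + real T * \<gamma>)"
    proof -
      have "\<theta> + real (b0 + T * m) * \<alpha> = (\<theta> + real b0 * \<alpha>) + real T * (real m * \<alpha>)" by (simp add: algebra_simps)
      also have "\<dots> = of_int \<lfloor>\<theta> + real b0 * \<alpha>\<rfloor> + \<xi> + real T * (real (a2 - 1) + \<gamma>)"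
        unfolding mal \<xi>_def by (simp add: frac_def)
      finally show ?thesis by (simp add: algebra_simps)
    qed
    have "FF \<alpha> \<theta> (b0 + T * m) = \<lfloor>\<theta> + real b0 * \<alpha>\<rfloor> + int T * int (a2 - 1) + \<lfloor>\<xi> + real T * \<gamma>\<rfloor>"
      unfolding FF_def e int_add_floor[symmetric] by simp
    then show ?thesis using F unfolding FF_def by (simp add: algebra_simps)
  qed
  have LH: "(\<xi> + real T * \<gamma> < 1) \<or> (real T * (1 - \<gamma>) \<le> \<xi>)"
  proof (cases "c - int (a2 - 1) \<le> 0")
    case True
    then have "int T * (c - int (a2 - 1)) \<le> 0" by (simp add: mult_nonneg_nonpos)
    then have "\<lfloor>\<xi> + real T * \<gamma>\<rfloor> < 1" using fl by simp
    then show ?thesis by (simp add: floor_less_iff)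
  next
    case False
    then have "1 \<le> c - int (a2 - 1)" by simp
    then have "int T * 1 \<le> int T * (c - int (a2 - 1))" by (intro mult_left_mono) auto
    then have "int T \<le> int T * (c - int (a2 - 1))" by simp
    then have "int T \<le> \<lfloor>\<xi> + real T * \<gamma>\<rfloor>" using fl by simp
    then have "real T \<le> \<xi> + real T * \<gamma>" by (simp add: le_floor_iff)
    then show ?thesis by (simp add: algebra_simps)
  qed
  have frs: "frac (\<theta> + real (b0 + u) * \<alpha>) = frac (\<xi> + real u * \<alpha>)" for u
  proof -
    have "\<theta> + real (b0 + u) * \<alpha> = (\<theta> + real b0 * \<alpha>) + real u * \<alpha>" by (simp add: algebra_simps)
    then show ?thesis unfolding \<xi>_def by (simp only: frac_add_simps)
  qed
  show ?thesis
  proof (cases "N + 2 \<le> 2 * a1")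
    case True
    show ?thesis
    proof (cases "\<delta> \<le> frac \<theta>")
      case True
      have "N div a1 = 1" using \<open>N + 2 \<le> 2 * a1\<close> mge Nm a1 by (intro div_nat_eqI) auto
      then show ?thesis
        using classA[OF w a _ d, of 0] True mge Nm a1 frac_lt_1[of \<theta>] by simp
    next
      case False
      have f1: "frac (\<theta> + 1 * \<alpha>) = frac \<theta> + \<alpha>"
      proof -
        have "frac (\<theta> + \<alpha>) = frac (frac \<theta> + \<alpha>)" by simp
        also have "\<dots> = frac \<theta> + \<alpha>" using False dpa a by (subst frac_eq) auto
        finally show ?thesis by simp
      qed
      have "(N - 1) div a1 = 1" using \<open>N + 2 \<le> 2 * a1\<close> mge Nm a1 by (intro div_nat_eqI) auto
      moreover have "1 mod a1 = 1" "1 div a1 = 0" using a1 by auto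
      moreover have "frac \<theta> + \<alpha> < 1" using False dpa by linarith
      moreover have "\<delta> \<le> frac \<theta> + \<alpha>" using da frac_ge_0[of \<theta>] by linarith
      ultimately show ?thesis
        using classA[OF w a _ d, of 1] f1 mge Nm a1 by simp
    qed
  next
    case long: False
    show ?thesis
    proof (cases "T + 3 \<le> a1")
      case True
      define A where "A = (real (T + 1) * real a2 - 1) * \<delta>"
      define B where "B = 1 - real a2 * \<delta>"
      have "1 \<le> (T + 1) * a2" using a2 by simp
      then have "1 \<le> real ((T + 1) * a2)" by linarith
      then have "0 \<le> real (T + 1) * real a2 - 1" by (simp only: of_nat_mult)
      then have A0: "0 \<le> A" unfolding A_def using d by simp
      have "real (T + 2) * (real a2 * \<delta>) \<le> real (T + 2) * \<alpha>" using a2 by (intro mult_left_mono) auto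
      moreover have "real (T + 2) * \<alpha> \<le> (real a1 - 1) * \<alpha>" using True a by (intro mult_right_mono) auto
      ultimately have "real (T + 2) * (real a2 * \<delta>) \<le> 1 - \<delta> - \<alpha>" using ra1 by (simp add: algebra_simps)
      then have AB: "\<alpha> + \<delta> \<le> B - A" unfolding A_def B_def using d(2) by (simp add: algebra_simps)
      obtain u where u: "u < a1" "A \<le> frac (\<xi> + real u * \<alpha>)" "frac (\<xi> + real u * \<alpha>) < B"
        using point_in[OF x01 A0 _ AB a(1) d(2) _ ra1] a1 d a2 unfolding B_def by auto
      define p where "p = b0 + u"
      have pN: "p \<le> N" using p_def u Nm mge by simp
      have sN: "p mod a1 + a1 \<le> N"
        proof -
          have "p mod a1 < a1" using a1 by simp
          then show ?thesis using long by linarith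
        qed
      have "p < (a2 + 1) * a1" using p_def u N mlt by (simp add: algebra_simps)
      then have "p div a1 < a2 + 1" by (rule less_mult_imp_div_less)
      then have K: "p div a1 \<le> a2" by simp
      have "N - p < (T + 1) * a2 * a1"
      proof -
        have "N - p \<le> T * m + e" using N p_def by simp
        also have "\<dots> < (T + 1) * m" using N by simp
        also have "\<dots> \<le> (T + 1) * (a2 * a1)" using mlt by (intro mult_le_mono2) simp
        finally show ?thesis by (simp add: algebra_simps)
      qed
      then have "(N - p) div a1 < (T + 1) * a2" by (rule less_mult_imp_div_less)
      then have "real ((N - p) div a1) \<le> real (T + 1) * real a2 - 1" by (rule nat_lt_real)
      then have c2: "real ((N - p) div a1) * \<delta> \<le> A" unfolding A_def using d by (intro mult_right_mono) auto
      have c1: "real (p div a1) * \<delta> \<le> real a2 * \<delta>" using K d by (intro mult_right_mono) auto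
      show ?thesis
        using classA[OF w a _ d pN sN] c1 c2 u frs[of u] a1 unfolding p_def B_def by linarith
    next
      case False
      then have T2: "2 \<le> T" using a1 by simp
      from LH show ?thesis
      proof
        assume low: "\<xi> + real T * \<gamma> < 1"
        have "T = 2"
        proof (rule ccontr)
          assume "T \<noteq> 2"
          then have "a1 + 1 \<le> 2 * T" using T2 False by simp
          then have "(real a1 + 1) * \<alpha> \<le> real (2 * T) * \<alpha>" using a by (intro mult_right_mono) auto
          moreover have "real T * (2 * \<alpha>) \<le> real T * \<gamma>" using ga by (intro mult_left_mono) auto
          ultimately show False using a1b low x01 by (simp add: algebra_simps)
        qed
        define p where "p = b0 + m"
        have pN: "p \<le> N" using p_def Nm by simp
        have sN: "p mod a1 + a1 \<le> N"
        proof -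
          have "p mod a1 < a1" using a1 by simp
          then show ?thesis using long by linarith
        qed
        have fp: "frac (\<theta> + real p * \<alpha>) = \<xi> + \<gamma>"
        proof -
          have "frac (\<theta> + real p * \<alpha>) = frac ((\<xi> + \<gamma>) + of_int (int (a2 - 1)))"
            unfolding p_def frs mal by (simp add: algebra_simps)
          also have "\<dots> = \<xi> + \<gamma>" using low \<open>T = 2\<close> x01 ga a by (subst frac_add_of_int_right, subst frac_eq) auto
          finally show ?thesis .
        qed
        have "p < 2 * (a2 * a1)" using p_def N mlt by simp
        then have "p < (2 * a2) * a1" by (simp add: mult.assoc)
        then have "p div a1 < 2 * a2" by (rule less_mult_imp_div_less)
        then have K: "real (p div a1) \<le> 2 * real a2 - 1" using nat_lt_real[of "p div a1" 2 a2] by simp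
        have "N - p < 2 * (a2 * a1)" using p_def N mlt \<open>T = 2\<close> by simp
        then have "N - p < (2 * a2) * a1" by (simp add: mult.assoc)
        then have "(N - p) div a1 < 2 * a2" by (rule less_mult_imp_div_less)
        then have F': "real ((N - p) div a1) \<le> 2 * real a2 - 1" using nat_lt_real[of "(N - p) div a1" 2 a2] by simp
        have bnd: "(2 * real a2 - 1) * \<delta> < \<gamma>"
        proof -
          have "(2 * real a2 - 1) * \<delta> + real (a2 - 1) * \<delta> = 3 * (real a2 * \<delta>) - 2 * \<delta>"
            unfolding a2m1 by (simp add: algebra_simps)
          then show ?thesis using a2 d r3 unfolding \<gamma>_def by linarith
        qed
        have c1: "real (p div a1) * \<delta> \<le> (2 * real a2 - 1) * \<delta>" using K d by (intro mult_right_mono) auto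
        have c2: "real ((N - p) div a1) * \<delta> \<le> (2 * real a2 - 1) * \<delta>" using F' d by (intro mult_right_mono) auto
        show ?thesis
          using classA[OF w a _ d pN sN] c1 c2 fp bnd low \<open>T = 2\<close> x01 a1 by simp
      next
        assume high: "real T * (1 - \<gamma>) \<le> \<xi>"
        have "real T * (\<alpha> + real a2 * \<delta>) \<le> real T * (1 - \<gamma>)" using g1 by (intro mult_left_mono) auto
        then have hx: "real T * \<alpha> + real T * (real a2 * \<delta>) \<le> \<xi>" using high by (simp add: algebra_simps)
        have "2 * \<alpha> \<le> real T * \<alpha>" using T2 a by (intro mult_right_mono) auto
        have "0 \<le> real T * (real a2 * \<delta>)" using d by simp
        define p where "p = b0 + (a1 - 1)"
        have pN: "p \<le> N" using p_def Nm mge by simp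
        have sN: "p mod a1 + a1 \<le> N"
        proof -
          have "p mod a1 < a1" using a1 by simp
          then show ?thesis using long by linarith
        qed
        have xa: "\<alpha> + \<delta> \<le> \<xi>" using hx \<open>2 * \<alpha> \<le> real T * \<alpha>\<close> \<open>0 \<le> real T * (real a2 * \<delta>)\<close> da by linarith
        have fp: "frac (\<theta> + real p * \<alpha>) = \<xi> - \<alpha> - \<delta>"
        proof -
          have "real (a1 - 1) * \<alpha> = 1 - \<delta> - \<alpha>" using a1 ra1 by (simp add: of_nat_diff algebra_simps)
          then have h: "\<xi> + real (a1 - 1) * \<alpha> = (\<xi> - \<alpha> - \<delta>) + 1" by linarith
          have "frac (\<theta> + real p * \<alpha>) = frac ((\<xi> - \<alpha> - \<delta>) + 1)"
            unfolding p_def frs h ..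
          also have "\<dots> = \<xi> - \<alpha> - \<delta>" using xa x01 a d(2) by (simp add: frac_1_eq frac_eq)
          finally show ?thesis .
        qed
        have "p < (a2 + 1) * a1" using p_def N mlt a1 by (simp add: algebra_simps)
        then have "p div a1 < a2 + 1" by (rule less_mult_imp_div_less)
      then have K: "p div a1 \<le> a2" by simp
        have c1: "real (p div a1) * \<delta> \<le> real a2 * \<delta>" using K d by (intro mult_right_mono) auto
        have "N - p + a1 < (T + 1) * (a2 * a1)"
        proof -
          have "1 * m \<le> T * m" using N(4) by (intro mult_le_mono1) simp
          then have "N - p + a1 \<le> T * m + e + 1" using N p_def a1 mge by linarith
          also have "\<dots> \<le> (T + 1) * m" using N by simp
          also have "\<dots> < (T + 1) * (a2 * a1)" using mlt by (intro mult_strict_left_mono) auto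
          finally show ?thesis .
        qed
        then have "N - p + a1 < ((T + 1) * a2) * a1" by (simp only: mult.assoc)
        then have "(N - p + a1) div a1 < (T + 1) * a2" by (rule less_mult_imp_div_less)
        moreover have "(N - p + a1) div a1 = (N - p) div a1 + 1" using a1 by simp
        ultimately have "(N - p) div a1 + 1 < (T + 1) * a2" by simp
        then have "real ((N - p) div a1 + 1) \<le> real (T + 1) * real a2 - 1" by (rule nat_lt_real)
        then have "real ((N - p) div a1) \<le> real (T + 1) * real a2 - 2" by simp
        then have c2: "real ((N - p) div a1) * \<delta> \<le> (real (T + 1) * real a2 - 2) * \<delta>" using d by (intro mult_right_mono) auto
        have "(real (T + 1) * real a2 - 2) * \<delta> = real T * (real a2 * \<delta>) + real a2 * \<delta> - 2 * \<delta>"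
          by (simp add: algebra_simps)
        then have c2': "real ((N - p) div a1) * \<delta> \<le> \<xi> - \<alpha> - \<delta>"
          using c2 hx \<open>2 * \<alpha> \<le> real T * \<alpha>\<close> a2 d by linarith
        show ?thesis
          using classA[OF w a _ d pN sN] c1 c2' fp a2d1 x01 a1 unfolding a2m1 by (simp add: algebra_simps)
      qed
    qed
  qed
qed



lemma take_count:
  assumes "0 \<le> \<alpha>" "\<alpha> < 1" "j \<le> N"
  shows "int (snd (parikh (take j (lw \<alpha> \<theta> N)))) = FF \<alpha> \<theta> j - FF \<alpha> \<theta> 0"
proof -
  have "take j (lw \<alpha> \<theta> N) = take (j - 0) (drop 0 (lw \<alpha> \<theta> N))" by simp
  also have "\<dots> = map (\<lambda>k. nat (FF \<alpha> \<theta> (Suc k) - FF \<alpha> \<theta> k)) [0..<j]"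
    by (rule lw_seg) (use assms in auto)
  finally show ?thesis using seg_parikh[OF assms(1,2), of 0 j \<theta>] by simp
qed

theorem lemma5p4:
  fixes \<alpha> :: real and w :: "nat list" and m :: nat
  assumes "0 < \<alpha>" and "\<alpha> < 1" and "\<alpha> \<notin> \<rat>"
    and "cf_a \<alpha> 1 \<ge> 2"
    and "w \<in> factors_slope \<alpha>"
    and "abelian_period w m"
    and "m \<notin> Q_set \<alpha> \<union> M_set \<alpha>"
    and "cf_a \<alpha> 1 \<ge> 4"
    and "(cf_a \<alpha> 2 - 1) * cf_q \<alpha> 1 + 2 < m" and "m < cf_a \<alpha> 2 * cf_q \<alpha> 1"
  shows "\<not> min_abelian_period w m"
proof -
  note a = assms(1,2)
  define a1 where "a1 = cf_a \<alpha> 1"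
  define a2 where "a2 = cf_a \<alpha> 2"
  have a1e: "a1 = nat \<lfloor>1 / \<alpha>\<rfloor>" unfolding a1_def cf_a_def by simp
  have a2e: "a2 = nat \<lfloor>1 / frac (1 / \<alpha>)\<rfloor>" unfolding a2_def cf_a_def by (simp add: numeral_2_eq_2)
  have q1: "cf_q \<alpha> 1 = a1" unfolding a1_def by simp
  have a14: "4 \<le> a1" using assms(8) a1_def by simp
  have inv_irr: "1 / \<alpha> \<notin> \<rat>"
  proof
    assume "1 / \<alpha> \<in> \<rat>"
    then have "1 / (1 / \<alpha>) \<in> \<rat>" by (rule Rats_divide[OF Rats_1])
    then show False using assms(3) by simp
  qed
  have fl0: "0 \<le> \<lfloor>1 / \<alpha>\<rfloor>" using a by simp
  have ra1: "real a1 = of_int \<lfloor>1 / \<alpha>\<rfloor>" unfolding a1e using fl0 by simp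
  have "real a1 \<le> 1 / \<alpha>" unfolding ra1 by simp
  moreover have "real a1 \<noteq> 1 / \<alpha>" using inv_irr by (metis Rats_of_nat)
  ultimately have lt: "real a1 < 1 / \<alpha>" by simp
  have ltb: "1 / \<alpha> < real a1 + 1" unfolding ra1 by linarith
  define \<delta> where "\<delta> = 1 - real a1 * \<alpha>"
  have d0: "0 < \<delta>" unfolding \<delta>_def using lt a by (simp add: field_simps)
  have a1b: "1 < (real a1 + 1) * \<alpha>" using ltb a by (simp add: field_simps)
  have frinv: "frac (1 / \<alpha>) = \<delta> / \<alpha>"
  proof -
    have "frac (1 / \<alpha>) = 1 / \<alpha> - real a1" unfolding frac_def ra1 by simp
    also have "\<dots> = \<delta> / \<alpha>" unfolding \<delta>_def using a by (simp add: field_simps)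
    finally show ?thesis .
  qed
  have a2e': "a2 = nat \<lfloor>\<alpha> / \<delta>\<rfloor>" unfolding a2e frinv by simp
  have "0 \<le> \<alpha> / \<delta>" using a d0 by simp
  then have "0 \<le> \<lfloor>\<alpha> / \<delta>\<rfloor>" by simp
  then have "real a2 = of_int \<lfloor>\<alpha> / \<delta>\<rfloor>" unfolding a2e' by simp
  then have ra2: "real a2 \<le> \<alpha> / \<delta>" by simp
  then have "real a2 * \<delta> \<le> \<alpha>" using d0 by (simp add: field_simps)
  moreover have "real a2 * \<delta> \<noteq> \<alpha>"
  proof
    assume h: "real a2 * \<delta> = \<alpha>"
    then have "\<alpha> * (1 + real a2 * real a1) = real a2" unfolding \<delta>_def by (simp add: algebra_simps)
    moreover have pos: "0 < 1 + real a2 * real a1" by (simp add: add_pos_nonneg)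
    ultimately have "\<alpha> = real a2 / (1 + real a2 * real a1)" by (simp add: eq_divide_eq)
    then have "\<alpha> \<in> \<rat>" by simp
    then show False using assms(3) by simp
  qed
  ultimately have a2d: "real a2 * \<delta> < \<alpha>" by simp
  have mlo: "(a2 - 1) * a1 + 2 < m" and mhi: "m < a2 * a1" using assms(9,10) q1 a1_def a2_def by simp_all
  have a22: "2 \<le> a2"
  proof (rule ccontr)
    assume "\<not> 2 \<le> a2"
    then have "a2 = 0 \<or> a2 = 1" by auto
    then show False
    proof
      assume "a2 = 0" then show False using mhi by simp
    next
      assume "a2 = 1"
      then have "m < a1" using mhi by simp
      moreover have "1 \<le> m" using mlo by simp
      ultimately have "m \<in> M_set \<alpha>" unfolding M_set_def a1_def
        by (intro CollectI exI[of _ 0] exI[of _ m]) simp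
      then show False using assms(7) by simp
    qed
  qed
  define r where "r = m - (a2 - 1) * a1"
  have mr: "m = (a2 - 1) * a1 + r" "3 \<le> r" using mlo unfolding r_def by auto
  have "a2 * a1 = (a2 - 1) * a1 + a1" using a22 by (cases a2) auto
  then have r1: "r + 1 \<le> a1" using mhi mr by simp
  obtain \<theta> where w: "w = lw \<alpha> \<theta> (length w)" using factor_lw[OF a assms(5)] by blast
  define N where "N = length w"
  have wN: "w = lw \<alpha> \<theta> N" using w N_def by simp
  obtain us where us: "abelian_decomp w us" "length (us ! 1) = m"
    using assms(6) unfolding abelian_period_def by blast
  have setw: "set w \<subseteq> {0,1}" using lw_set[of \<alpha> \<theta> N] a wN by simp
  obtain b0 T e c where ex: "1 \<le> T" "b0 < m" "e < m" "N = b0 + T * m + e"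
    "\<forall>k\<le>T. snd (parikh (take (b0 + k * m) w)) = snd (parikh (take b0 w)) + k * c"
    using decomp_extract[OF us(1) setw] us(2) N_def by metis
  have le1: "b0 + T * m \<le> N" "b0 \<le> N" using ex by auto
  have cnt: "int (snd (parikh (take (b0 + T * m) w))) = int (snd (parikh (take b0 w))) + int T * int c"
    using ex(5) by simp
  then have F: "FF \<alpha> \<theta> (b0 + T * m) - FF \<alpha> \<theta> b0 = int T * int c"
  proof -
    have "int (snd (parikh (take (b0 + T * m) w))) = FF \<alpha> \<theta> (b0 + T * m) - FF \<alpha> \<theta> 0"
      unfolding wN by (rule take_count) (use a le1 in auto)
    moreover have "int (snd (parikh (take b0 w))) = FF \<alpha> \<theta> b0 - FF \<alpha> \<theta> 0"
      unfolding wN by (rule take_count) (use a le1 in auto)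
    ultimately show ?thesis using cnt by simp
  qed
  have "abelian_period w a1"
    by (rule main_core[OF wN a a14 \<delta>_def d0 a22 a2d a1b mr(1,2) r1 ex(4,2,3,1) F])
  moreover have "a1 < m" using mr a22 a14
  proof -
    have "1 * a1 \<le> (a2 - 1) * a1" using a22 by (intro mult_le_mono1) simp
    then show ?thesis using mr by linarith
  qed
  ultimately show ?thesis unfolding min_abelian_period_def by auto
qed

end
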